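(* Let $p,q,e$ be positive integers and $n>1$ an integer. If $(x,y)\in\mathbb{Z}_{2^e}^2$ lies on a cycle of length $n$ of the Cat map over $\mathbb{Z}_{2^e}$, then $$(G_n-2)\,x\equiv 0\pmod{2^e}\quad\text{and}\quad (G_n-2)\,y\equiv 0\pmod{2^e}.$$
   Context: $\mathbf{C}=\begin{bmatrix}1 & p\\ q & 1+pq\end{bmatrix}$; the Cat map over $\mathbb{Z}_{2^e}$ is the bijection $v\mapsto\mathbf{C}v\bmod 2^e$ of $\mathbb{Z}_{2^e}^2$; a point lies on a cycle of length $n$ if $n$ is the least positive integer with $\mathbf{C}^nv\equiv v\pmod{2^e}$. $A=pq+2$, $B=\sqrt{A^2-4}$, $G_n=\left(\frac{A+B}{2}\right)^n+\left(\frac{A-B}{2}\right)^n$ (an integer). *)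

theory Defs
  imports Complex_Main
begin

definition cat_step :: "int \<Rightarrow> int \<Rightarrow> nat \<Rightarrow> int \<times> int \<Rightarrow> int \<times> int" where
  "cat_step p q e v = (case v of (x, y) \<Rightarrow>
     ((x + p * y) mod 2 ^ e, (q * x + (1 + p * q) * y) mod 2 ^ e))"

definition on_cycle :: "int \<Rightarrow> int \<Rightarrow> nat \<Rightarrow> nat \<Rightarrow> int \<times> int \<Rightarrow> bool" where
  "on_cycle p q e n v \<longleftrightarrow> 0 < n \<and> (cat_step p q e ^^ n) v = v \<and>
     (\<forall>m. 0 < m \<and> m < n \<longrightarrow> (cat_step p q e ^^ m) v \<noteq> v)"

definition catA :: "int \<Rightarrow> int \<Rightarrow> real" where
  "catA p q = real_of_int (p * q + 2)"

definition catB :: "int \<Rightarrow> int \<Rightarrow> real" where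
  "catB p q = sqrt (catA p q ^ 2 - 4)"

definition catG :: "int \<Rightarrow> int \<Rightarrow> nat \<Rightarrow> real" where
  "catG p q n = ((catA p q + catB p q) / 2) ^ n + ((catA p q - catB p q) / 2) ^ n"

end

theory Submission
  imports Defs
begin

fun gs :: "int \<Rightarrow> nat \<Rightarrow> int" where
  "gs a 0 = 2"
| "gs a (Suc 0) = a"
| "gs a (Suc (Suc n)) = a * gs a (Suc n) - gs a n"

fun catM :: "int \<Rightarrow> int \<Rightarrow> int \<times> int \<Rightarrow> int \<times> int" where
  "catM p q (x, y) = (x + p * y, q * x + (1 + p * q) * y)"

fun catI :: "int \<Rightarrow> int \<Rightarrow> int \<times> int \<Rightarrow> int \<times> int" where
  "catI p q (x, y) = ((1 + p * q) * x - p * y, - q * x + y)"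

definition mp :: "nat \<Rightarrow> int \<times> int \<Rightarrow> int \<times> int" where
  "mp e u = (fst u mod 2 ^ e, snd u mod 2 ^ e)"

lemma nat2_induct:
  assumes "P 0" "P (Suc 0)" "\<And>n. P n \<Longrightarrow> P (Suc n) \<Longrightarrow> P (Suc (Suc n))"
  shows "P n"
proof -
  have "P n \<and> P (Suc n)" by (induction n) (use assms in auto)
  thus ?thesis by simp
qed

lemma root_eq:
  fixes a b r :: real
  assumes "b ^ 2 = a ^ 2 - 4" and "r = (a + b) / 2 \<or> r = (a - b) / 2"
  shows "r ^ 2 = a * r - 1"
proof -
  have "b = 2 * r - a \<or> b = - (2 * r - a)" using assms(2) by auto
  hence "b ^ 2 = (2 * r - a) ^ 2" by (metis power2_minus)
  hence "(2 * r - a) ^ 2 = a ^ 2 - 4" using assms(1) by simp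
  thus ?thesis by (simp add: power2_eq_square algebra_simps)
qed

lemma catG_gs:
  assumes "p > 0" "q > 0"
  shows "catG p q n = real_of_int (gs (p * q + 2) n)"
proof -
  define a where "a = catA p q"
  define b where "b = catB p q"
  have a1: "a = real_of_int (p * q + 2)" unfolding a_def catA_def by simp
  have "p * q \<ge> 1" using assms by (simp add: int_one_le_iff_zero_less)
  hence "a \<ge> 3" using a1 by linarith
  hence "3 * 3 \<le> a * a" using mult_mono[of 3 a 3 a] by simp
  hence "a ^ 2 - 4 \<ge> 0" by (simp add: power2_eq_square)
  hence bb: "b ^ 2 = a ^ 2 - 4" unfolding b_def catB_def a_def[symmetric] by simp
  define r1 where "r1 = (a + b) / 2"
  define r2 where "r2 = (a - b) / 2"
  have r1: "r1 ^ 2 = a * r1 - 1" using root_eq[OF bb] r1_def by blast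
  have r2: "r2 ^ 2 = a * r2 - 1" using root_eq[OF bb] r2_def by blast
  have G: "catG p q n = r1 ^ n + r2 ^ n" for n
    unfolding catG_def r1_def r2_def a_def b_def by simp
  have sum1: "r1 + r2 = a" unfolding r1_def r2_def by (simp add: field_simps)
  show ?thesis
  proof (induction n rule: nat2_induct)
    case 1 then show ?case by (simp add: G)
  next
    case 2 then show ?case by (simp add: G sum1 a1)
  next
    case (3 n)
    have "r1 ^ Suc (Suc n) = r1 ^ n * r1 ^ 2" by (simp add: power2_eq_square algebra_simps)
    also have "... = r1 ^ n * (a * r1 - 1)" using r1 by simp
    also have "... = a * r1 ^ Suc n - r1 ^ n" by (simp add: algebra_simps)
    finally have R1: "r1 ^ Suc (Suc n) = a * r1 ^ Suc n - r1 ^ n" .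
    have "r2 ^ Suc (Suc n) = r2 ^ n * r2 ^ 2" by (simp add: power2_eq_square algebra_simps)
    also have "... = r2 ^ n * (a * r2 - 1)" using r2 by simp
    also have "... = a * r2 ^ Suc n - r2 ^ n" by (simp add: algebra_simps)
    finally have R2: "r2 ^ Suc (Suc n) = a * r2 ^ Suc n - r2 ^ n" .
    have "catG p q (Suc (Suc n)) = a * (r1 ^ Suc n + r2 ^ Suc n) - (r1 ^ n + r2 ^ n)"
      unfolding G R1 R2 by (simp add: algebra_simps)
    also have "... = a * catG p q (Suc n) - catG p q n" by (simp add: G)
    also have "... = real_of_int (gs (p * q + 2) (Suc (Suc n)))"
      using 3 by (simp add: a1)
    finally show ?case .
  qed
qed

lemma step_mp: "cat_step p q e (mp e u) = mp e (catM p q u)"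
proof -
  obtain x y where u: "u = (x, y)" by (cases u)
  have "(x mod 2^e + p * (y mod 2^e)) mod 2^e = (x + p * y) mod (2::int)^e"
    by (intro mod_add_cong mod_diff_cong mod_mult_cong) simp_all
  moreover have "(q * (x mod 2^e) + (1 + p * q) * (y mod 2^e)) mod 2^e
      = (q * x + (1 + p * q) * y) mod (2::int)^e"
    by (intro mod_add_cong mod_diff_cong mod_mult_cong) simp_all
  ultimately show ?thesis by (simp add: u mp_def cat_step_def)
qed

lemma iter_mp: "(cat_step p q e ^^ n) (mp e u) = mp e ((catM p q ^^ n) u)"
  by (induction n) (simp_all add: step_mp)

lemma catI_cong:
  assumes "mp e u = mp e v"
  shows "mp e ((catI p q ^^ n) u) = mp e ((catI p q ^^ n) v)"
  using assms
proof (induction n)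
  case 0 then show ?case by simp
next
  case (Suc n)
  obtain a b where ab: "(catI p q ^^ n) u = (a, b)" by (cases "(catI p q ^^ n) u")
  obtain c d where cd: "(catI p q ^^ n) v = (c, d)" by (cases "(catI p q ^^ n) v")
  from Suc ab cd have h1: "a mod 2^e = c mod (2::int)^e" and h2: "b mod 2^e = d mod (2::int)^e"
    by (auto simp: mp_def)
  have "((1 + p * q) * a - p * b) mod 2^e = ((1 + p * q) * (a mod 2^e) - p * (b mod 2^e)) mod (2::int)^e"
    by (intro mod_add_cong mod_diff_cong mod_mult_cong) simp_all
  also have "... = ((1 + p * q) * (c mod 2^e) - p * (d mod 2^e)) mod (2::int)^e" by (simp only: h1 h2)
  also have "... = ((1 + p * q) * c - p * d) mod (2::int)^e" by (intro mod_add_cong mod_diff_cong mod_mult_cong) simp_all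
  finally have k1: "((1 + p * q) * a - p * b) mod 2^e = ((1 + p * q) * c - p * d) mod (2::int)^e" .
  have "(- q * a + b) mod 2^e = (- q * (a mod 2^e) + (b mod 2^e)) mod (2::int)^e"
    by (intro mod_add_cong mod_diff_cong mod_mult_cong) simp_all
  also have "... = (- q * (c mod 2^e) + (d mod 2^e)) mod (2::int)^e" by (simp only: h1 h2)
  also have "... = (- q * c + d) mod (2::int)^e" by (intro mod_add_cong mod_diff_cong mod_mult_cong) simp_all
  finally have k2: "(- q * a + b) mod 2^e = (- q * c + d) mod (2::int)^e" .
  show ?case using k1 k2 by (simp add: ab cd mp_def)
qed

lemma M2: "catM p q (catM p q u) = (let w = catM p q u in
   ((p*q+2) * fst w - fst u, (p*q+2) * snd w - snd u))"
  by (cases u) (simp add: algebra_simps)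

lemma I2: "catI p q (catI p q u) = (let w = catI p q u in
   ((p*q+2) * fst w - fst u, (p*q+2) * snd w - snd u))"
  by (cases u) (simp add: algebra_simps)

lemma sum_id:
  "fst ((catM p q ^^ n) v) + fst ((catI p q ^^ n) v) = gs (p*q+2) n * fst v \<and>
   snd ((catM p q ^^ n) v) + snd ((catI p q ^^ n) v) = gs (p*q+2) n * snd v"
proof (induction n rule: nat2_induct)
  case 1 then show ?case by simp
next
  case 2 then show ?case by (cases v) (simp add: algebra_simps)
next
  case (3 n)
  define A where "A = p*q+2"
  let ?M = "(catM p q ^^ n) v" and ?I = "(catI p q ^^ n) v"
  let ?M1 = "(catM p q ^^ Suc n) v" and ?I1 = "(catI p q ^^ Suc n) v"
  have e1: "(catM p q ^^ Suc (Suc n)) v = catM p q ?M1" by simp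
  have e2: "(catI p q ^^ Suc (Suc n)) v = catI p q ?I1" by simp
  have m1: "?M1 = catM p q ?M" and i1: "?I1 = catI p q ?I" by simp_all
  have f1: "fst (catM p q ?M1) = A * fst ?M1 - fst ?M" "snd (catM p q ?M1) = A * snd ?M1 - snd ?M"
    unfolding m1 M2 A_def Let_def by simp_all
  have f2: "fst (catI p q ?I1) = A * fst ?I1 - fst ?I" "snd (catI p q ?I1) = A * snd ?I1 - snd ?I"
    unfolding i1 I2 A_def Let_def by simp_all
  have g: "gs (p*q+2) (Suc (Suc n)) = A * gs (p*q+2) (Suc n) - gs (p*q+2) n"
    by (simp add: A_def)
  have "fst (catM p q ?M1) + fst (catI p q ?I1) = A * (fst ?M1 + fst ?I1) - (fst ?M + fst ?I)"
    unfolding f1 f2 by (simp add: algebra_simps)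
  also have "... = gs (p*q+2) (Suc (Suc n)) * fst v"
    using 3 unfolding g by (simp add: algebra_simps)
  finally have X: "fst (catM p q ?M1) + fst (catI p q ?I1) = gs (p*q+2) (Suc (Suc n)) * fst v" .
  have "snd (catM p q ?M1) + snd (catI p q ?I1) = A * (snd ?M1 + snd ?I1) - (snd ?M + snd ?I)"
    unfolding f1 f2 by (simp add: algebra_simps)
  also have "... = gs (p*q+2) (Suc (Suc n)) * snd v"
    using 3 unfolding g by (simp add: algebra_simps)
  finally have Y: "snd (catM p q ?M1) + snd (catI p q ?I1) = gs (p*q+2) (Suc (Suc n)) * snd v" .
  show ?case unfolding e1 e2 using X Y by simp
qed

theorem lemma7:
  fixes p q :: int and e n :: nat and x y :: int
  assumes "p > 0" and "q > 0" and "e > 0" and "n > 1"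
    and "0 \<le> x" and "x < 2 ^ e" and "0 \<le> y" and "y < 2 ^ e"
    and "on_cycle p q e n (x, y)"
  shows "\<exists>g::int. real_of_int g = catG p q n \<and>
           (g - 2) * x mod 2 ^ e = 0 \<and> (g - 2) * y mod 2 ^ e = 0"
proof -
  define v where "v = (x, y)"
  have vm: "mp e v = v" using assms(5-8) by (simp add: v_def mp_def)
  have cyc: "(cat_step p q e ^^ n) v = v" using assms(9) by (simp add: on_cycle_def v_def)
  have c1: "mp e ((catM p q ^^ n) v) = mp e v"
    using cyc iter_mp[where p=p and q=q and e=e and n=n and u=v] vm by simp
  have "mp e ((catI p q ^^ n) ((catM p q ^^ n) v)) = mp e ((catI p q ^^ n) v)"
    using catI_cong[OF c1] .
  moreover have "(catI p q ^^ n) ((catM p q ^^ n) v) = v"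
  proof -
    have "(catI p q ^^ k) ((catM p q ^^ k) u) = u" for k u
    proof (induction k arbitrary: u)
      case 0 then show ?case by simp
    next
      case (Suc k)
      have "catI p q (catM p q w) = w" for w by (cases w) (simp add: algebra_simps)
      then show ?case using Suc
        by (metis comp_apply funpow_Suc_right funpow.simps(2))
    qed
    thus ?thesis .
  qed
  ultimately have c2: "mp e ((catI p q ^^ n) v) = mp e v" by simp
  define g where "g = gs (p*q+2) n"
  have S: "fst ((catM p q ^^ n) v) + fst ((catI p q ^^ n) v) = g * x"
          "snd ((catM p q ^^ n) v) + snd ((catI p q ^^ n) v) = g * y"
    using sum_id[where p=p and q=q and n=n and v=v] by (simp_all add: g_def v_def)
  have "(g * x) mod 2^e = (x + x) mod 2^e"
    using c1 c2 unfolding S(1)[symmetric] by (simp add: mp_def v_def mod_add_eq[symmetric] mod_mult_right_eq)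
  hence "(2::int)^e dvd g * x - (x + x)" by (simp only: mod_eq_dvd_iff)
  moreover have "g * x - (x + x) = (g - 2) * x" by (simp add: algebra_simps)
  ultimately have X: "(g - 2) * x mod 2^e = 0" by (metis dvd_imp_mod_0)
  have "(g * y) mod 2^e = (y + y) mod 2^e"
    using c1 c2 unfolding S(2)[symmetric] by (simp add: mp_def v_def mod_add_eq[symmetric] mod_mult_right_eq)
  hence "(2::int)^e dvd g * y - (y + y)" by (simp only: mod_eq_dvd_iff)
  moreover have "g * y - (y + y) = (g - 2) * y" by (simp add: algebra_simps)
  ultimately have Y: "(g - 2) * y mod 2^e = 0" by (metis dvd_imp_mod_0)
  have "real_of_int g = catG p q n" using catG_gs[OF assms(1,2), of n] g_def by simp
  then show ?thesis using X Y by (intro exI[of _ g] conjI)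
qed

end
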